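(* Let $f:\mathbb{R}^n\to\mathbb{R}$ be a continuously differentiable convex function, let $h:\mathbb{R}^n\to\mathbb{R}$ be a continuously differentiable strictly convex function, and assume $f$ is $L_h$-smooth relative to $h$ for some $L_h>0$, i.e. $L_h h - f$ is convex. Let $s$ be a positive integer, let $C_s=\{x\in\mathbb{R}^n: \|x\|_0\le s\}$, and let $x^*$ be an optimal solution of $\min\{f(x): x\in C_s\}$. Let $L>L_h$. Then $$x^*\in \operatorname*{argmin}_{y\in C_s}\ \nabla f(x^* )^T(y-x^* )+L\,D_h(y,x^* ).$$
   Context: $\|x\|_0$ denotes the number of nonzero entries of $x$. The Bregman distance generated by $h$ is $D_h(y,x)=h(y)-h(x)-\nabla h(x)^T(y-x)$. *)

theory Defs
  imports "HOL-Analysis.Analysis"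
begin

definition strictly_convex_on :: "'a::real_vector set \<Rightarrow> ('a \<Rightarrow> real) \<Rightarrow> bool" where
  "strictly_convex_on S f \<longleftrightarrow>
     (\<forall>x\<in>S. \<forall>y\<in>S. \<forall>u::real. x \<noteq> y \<and> 0 < u \<and> u < 1 \<longrightarrow>
        f (u *\<^sub>R x + (1 - u) *\<^sub>R y) < u * f x + (1 - u) * f y)"

definition l0 :: "real ^ 'n \<Rightarrow> nat" where
  "l0 x = card {i. x $ i \<noteq> 0}"

definition sparse_set :: "nat \<Rightarrow> (real ^ 'n) set" where
  "sparse_set s = {x. l0 x \<le> s}"

definition bregman :: "('a::real_inner \<Rightarrow> real) \<Rightarrow> ('a \<Rightarrow> 'a) \<Rightarrow> 'a \<Rightarrow> 'a \<Rightarrow> real" where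
  "bregman h gh y x = h y - h x - inner (gh x) (y - x)"

definition argmin_on :: "'a set \<Rightarrow> ('a \<Rightarrow> real) \<Rightarrow> 'a set" where
  "argmin_on S g = {x \<in> S. \<forall>y\<in>S. g x \<le> g y}"

end

theory Submission
  imports Defs
begin

lemma tangent_ineq:
  fixes \<phi> :: "'a::real_normed_vector \<Rightarrow> real"
  assumes cv: "convex_on UNIV \<phi>" and d: "(\<phi> has_derivative D) (at x)"
  shows "\<phi> x + D (y - x) \<le> \<phi> y"
proof -
  define g where "g t = \<phi> (x + t *\<^sub>R (y - x))" for t :: real
  have gc: "convex_on UNIV g"
    unfolding convex_on_def g_def
  proof (intro conjI ballI allI impI)
    show "convex (UNIV::real set)" by simp
  next
    fix a b u v :: real assume uv: "0 \<le> u" "0 \<le> v" "u + v = 1"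
    have "x + (u * a + v * b) *\<^sub>R (y - x) = u *\<^sub>R (x + a *\<^sub>R (y - x)) + v *\<^sub>R (x + b *\<^sub>R (y - x))"
    proof -
      have "x = u *\<^sub>R x + v *\<^sub>R x" using uv by (metis scaleR_add_left scaleR_one)
      then show ?thesis by (simp add: algebra_simps)
    qed
    moreover have "\<phi> (u *\<^sub>R (x + a *\<^sub>R (y - x)) + v *\<^sub>R (x + b *\<^sub>R (y - x)))
       \<le> u * \<phi> (x + a *\<^sub>R (y - x)) + v * \<phi> (x + b *\<^sub>R (y - x))"
      using cv uv unfolding convex_on_def by blast
    ultimately show "\<phi> (x + (u *\<^sub>R a + v *\<^sub>R b) *\<^sub>R (y - x)) \<le> u * \<phi> (x + a *\<^sub>R (y - x)) + v * \<phi> (x + b *\<^sub>R (y - x))"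
      by simp
  qed
  have ld: "linear D" using d has_derivative_linear by blast
  have "((\<lambda>t. x + t *\<^sub>R (y - x)) has_derivative (\<lambda>t. t *\<^sub>R (y - x))) (at 0)"
    by (auto intro!: derivative_eq_intros)
  moreover have "(\<phi> has_derivative D) (at ((\<lambda>t. x + t *\<^sub>R (y - x)) 0))" using d by simp
  ultimately have "(g has_derivative (\<lambda>t. D (t *\<^sub>R (y - x)))) (at 0)"
    unfolding g_def using has_derivative_compose[of "\<lambda>t. x + t *\<^sub>R (y - x)"] by (metis (no_types) comp_def)
  moreover have "(\<lambda>t. D (t *\<^sub>R (y - x))) = (\<lambda>t. D (y - x) * t)"
    using ld by (simp add: linear_scale mult.commute)
  ultimately have "(g has_field_derivative D (y - x)) (at 0)"
    by (simp add: has_field_derivative_def)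
  then have "g 1 - g 0 \<ge> D (y - x) * (1 - 0)"
    by (intro convex_on_imp_above_tangent[OF gc]) auto
  then show ?thesis by (simp add: g_def)
qed

theorem lemma3p2:
  fixes f h :: "real ^ 'n \<Rightarrow> real"
    and gf gh :: "real ^ 'n \<Rightarrow> real ^ 'n"
    and Lh L :: real and s :: nat and xstar :: "real ^ 'n"
  assumes f_deriv: "\<And>x. (f has_derivative (\<lambda>d. inner (gf x) d)) (at x)"
    and gf_cont: "continuous_on UNIV gf"
    and h_deriv: "\<And>x. (h has_derivative (\<lambda>d. inner (gh x) d)) (at x)"
    and gh_cont: "continuous_on UNIV gh"
    and f_convex: "convex_on UNIV f"
    and h_strict: "strictly_convex_on UNIV h"
    and Lh_pos: "Lh > 0"
    and rel_smooth: "convex_on UNIV (\<lambda>x. Lh * h x - f x)"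
    and s_pos: "s \<ge> 1"
    and opt: "xstar \<in> argmin_on (sparse_set s) f"
    and L_gt: "L > Lh"
  shows "xstar \<in> argmin_on (sparse_set s)
           (\<lambda>y. inner (gf xstar) (y - xstar) + L * bregman h gh y xstar)"
proof -
  have xs: "xstar \<in> sparse_set s" and fmin: "\<And>y. y \<in> sparse_set s \<Longrightarrow> f xstar \<le> f y"
    using opt unfolding argmin_on_def by auto
  have key: "0 \<le> inner (gf xstar) (y - xstar) + L * bregman h gh y xstar" if y: "y \<in> sparse_set s" for y
  proof -
    have dphi: "((\<lambda>x. Lh * h x - f x) has_derivative (\<lambda>d. Lh * inner (gh xstar) d - inner (gf xstar) d)) (at xstar)"
      by (intro derivative_eq_intros) (auto intro: h_deriv f_deriv)
    have t1: "(Lh * h xstar - f xstar) + (Lh * inner (gh xstar) (y - xstar) - inner (gf xstar) (y - xstar)) \<le> Lh * h y - f y"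
      using tangent_ineq[OF rel_smooth dphi, of y] by simp
    have hc: "convex_on UNIV h"
      unfolding convex_on_def
    proof (intro conjI ballI allI impI)
      show "convex (UNIV :: (real ^ 'n) set)" by simp
    next
      fix a b :: "real ^ 'n" and u v :: real
      assume uv: "0 \<le> u" "0 \<le> v" "u + v = 1"
      show "h (u *\<^sub>R a + v *\<^sub>R b) \<le> u * h a + v * h b"
      proof (cases "a = b \<or> u = 0 \<or> v = 0")
        case True
        then show ?thesis
        proof (elim disjE)
          assume "a = b"
          then show ?thesis using uv by (metis scaleR_add_left scaleR_one distrib_right mult_1 order_refl)
        next
          assume "u = 0" then show ?thesis using uv by simp
        next
          assume "v = 0" then show ?thesis using uv by simp
        qed
      next
        case False
        then have "a \<noteq> b" "0 < u" "u < 1" "v = 1 - u" using uv by auto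
        then show ?thesis using h_strict unfolding strictly_convex_on_def
          by (metis UNIV_I less_imp_le)
      qed
    qed
    have t2: "h xstar + inner (gh xstar) (y - xstar) \<le> h y"
      using tangent_ineq[OF hc h_deriv, of xstar y] by simp
    have B: "bregman h gh y xstar \<ge> 0" using t2 unfolding bregman_def by simp
    have "f xstar \<le> f y" using fmin y .
    hence "0 \<le> inner (gf xstar) (y - xstar) + Lh * bregman h gh y xstar"
      using t1 unfolding bregman_def by (simp add: algebra_simps)
    moreover have "Lh * bregman h gh y xstar \<le> L * bregman h gh y xstar"
      using B L_gt by (simp add: mult_right_mono)
    ultimately show ?thesis by linarith
  qed
  show ?thesis unfolding argmin_on_def
    using xs key by (simp add: bregman_def)
qed

end
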